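(* Let $q$ be a prime power, $A=\mathbb{F}_q[T]$, and let $m\in A$ be a monic polynomial of degree $d>1$. Write $\det D_m^{(-)}(X)=1+a_1X+a_2X^2+\cdots$ with the matrix $D_m^{(-)}(X)$ defined in the context. Then: (1) $a_1=0$; (2) if $\deg m>2$, then $a_2=0$; (3) if $\deg m=2$, then $a_2=\frac{N_m}{2}\{(q-1)(1-C_m)+N_m-1\}$, where $C_m=\#\{i\in\{1,\dots,N_m\}: L(\alpha_i^{-1})=1\}$.
   Context: For $\alpha\in(A/(m))^\times$ let $r_\alpha\in A$ be the unique representative of $\alpha$ with $\deg r_\alpha<d$; set $\mathrm{Deg}(\alpha)=\deg r_\alpha$ and let $L(\alpha)\in\mathbb{F}_q^\times$ be the leading coefficient of $r_\alpha$. Let $N_m=\#(A/(m))^\times/(q-1)$ and let $\alpha_1,\dots,\alpha_{N_m}$ be all elements of $(A/(m))^\times$ with $L(\alpha)=1$. For a character $\lambda$ of $\mathbb{F}_q^\times$ put $c_{ij}^\lambda=\lambda^{-1}(L(\alpha_i\alpha_j^{-1}))$, $d_{ij}=\mathrm{Deg}(\alpha_i\alpha_j^{-1})$, $D_m^{(\lambda)}(X)=(c_{ij}^\lambda X^{d_{ij}})_{i,j=1,\dots,N_m}$, and $D_m^{(-)}(X)=\prod_{\lambda\ne1}D_m^{(\lambda)}(X)$, the product over all non-trivial characters of $\mathbb{F}_q^\times$. (Since $D_m^{(-)}(0)$ is the identity matrix, $\det D_m^{(-)}(X)$ has constant term $1$ and integer coefficients.) *)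

theory Defs
  imports "HOL-Computational_Algebra.Polynomial" "Jordan_Normal_Form.Determinant"
begin

definition unit_reps :: "'a::{finite,field} poly \<Rightarrow> 'a poly set" where
  "unit_reps m = {r. degree r < degree m \<and> coprime r m}"

definition N_m :: "'a::{finite,field} poly \<Rightarrow> nat" where
  "N_m m = card (unit_reps m) div (card (UNIV :: 'a set) - 1)"

definition monic_unit_reps :: "'a::{finite,field} poly \<Rightarrow> 'a poly set" where
  "monic_unit_reps m = {r \<in> unit_reps m. lead_coeff r = 1}"

definition inv_rep :: "'a::{finite,field} poly \<Rightarrow> 'a poly \<Rightarrow> 'a poly" where
  "inv_rep m r = (THE s. s \<in> unit_reps m \<and> (r * s) mod m = 1)"

definition quot_rep :: "'a::{finite,field} poly \<Rightarrow> 'a poly \<Rightarrow> 'a poly \<Rightarrow> 'a poly" where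
  "quot_rep m a b = (a * inv_rep m b) mod m"

text \<open>Characters of F_q^x (complex valued, extended by 0 at 0).\<close>
definition characters :: "('a::{finite,field} \<Rightarrow> complex) set" where
  "characters = {\<chi>. \<chi> 0 = 0 \<and> \<chi> 1 = 1 \<and>
      (\<forall>x y. x \<noteq> 0 \<longrightarrow> y \<noteq> 0 \<longrightarrow> \<chi> (x * y) = \<chi> x * \<chi> y)}"

definition nontrivial_characters :: "('a::{finite,field} \<Rightarrow> complex) set" where
  "nontrivial_characters = {\<chi> \<in> characters. \<exists>x. x \<noteq> 0 \<and> \<chi> x \<noteq> 1}"

definition D_mat :: "'a::{finite,field} poly \<Rightarrow> 'a poly list \<Rightarrow> ('a \<Rightarrow> complex) \<Rightarrow> complex poly mat" where
  "D_mat m als \<chi> = mat (length als) (length als)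
     (\<lambda>(i, j). monom (inverse (\<chi> (lead_coeff (quot_rep m (als ! i) (als ! j)))))
                     (degree (quot_rep m (als ! i) (als ! j))))"

definition D_minus :: "'a::{finite,field} poly \<Rightarrow> 'a poly list \<Rightarrow> ('a \<Rightarrow> complex) list \<Rightarrow> complex poly mat" where
  "D_minus m als chis = foldr (\<lambda>\<chi> M. D_mat m als \<chi> * M) chis (1\<^sub>m (length als))"

definition C_m :: "'a::{finite,field} poly \<Rightarrow> nat" where
  "C_m m = card {r \<in> monic_unit_reps m. lead_coeff (inv_rep m r) = 1}"

end

theory Submission
  imports Defs "HOL-Algebra.Multiplicative_Group"
begin
hide_const (open) up_ring.coeff up_ring.monom


lemma prod_monom_gen:
  "prod (\<lambda>i. monom (f i :: 'b::comm_semiring_1) (g i)) A = monom (prod f A) (sum g A)"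
proof (cases "finite A")
  case True thus ?thesis
    by (induct A rule: finite_induct) (simp_all add: mult_monom monom_0 one_pCons)
next
  case False thus ?thesis by (simp add: monom_0 one_pCons)
qed

lemma of_int_times_monom:
  "(of_int z :: 'b::comm_ring_1 poly) * monom a k = monom (of_int z * a) k"
proof -
  have "(of_int z :: 'b poly) = monom (of_int z) 0" by (simp add: monom_0 of_int_poly)
  thus ?thesis by (simp add: mult_monom)
qed

locale dmat =
  fixes n :: nat and c :: "nat \<Rightarrow> nat \<Rightarrow> complex" and d :: "nat \<Rightarrow> nat \<Rightarrow> nat"
  assumes diag: "\<And>i. i < n \<Longrightarrow> d i i = 0 \<and> c i i = 1"
    and offd: "\<And>i j. i < n \<Longrightarrow> j < n \<Longrightarrow> i \<noteq> j \<Longrightarrow> d i j \<ge> 1"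
begin

definition M where "M = mat n n (\<lambda>(i,j). monom (c i j) (d i j))"
definition S where "S p = (\<Sum>i=0..<n. d i (p i))"
definition P where "P = {p. p permutes {0..<n}}"
definition f where "f k p = (if S p = k then of_int (sign p) * (\<Prod>i=0..<n. c i (p i)) else 0)"

lemma coeff_det: "coeff (det M) k = (\<Sum>p\<in>P. f k p)"
proof -
  have M: "M \<in> carrier_mat n n" by (simp add: M_def)
  have "det M = (\<Sum>p\<in>P. signof p * (\<Prod>i=0..<n. M $$ (i, p i)))"
    unfolding det_def'[OF M] P_def by simp
  also have "\<dots> = (\<Sum>p\<in>P. monom (of_int (sign p) * (\<Prod>i=0..<n. c i (p i))) (S p))"
  proof (rule sum.cong[OF refl])
    fix p assume p: "p \<in> P"
    have "(\<Prod>i=0..<n. M $$ (i, p i)) = (\<Prod>i=0..<n. monom (c i (p i)) (d i (p i)))"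
    proof (rule prod.cong[OF refl])
      fix i assume i: "i \<in> {0..<n}"
      have "p i < n" using p i unfolding P_def by (auto intro: permutes_in_image[THEN iffD2])
      thus "M $$ (i, p i) = monom (c i (p i)) (d i (p i))" using i by (simp add: M_def)
    qed
    also have "\<dots> = monom (\<Prod>i=0..<n. c i (p i)) (S p)"
      by (simp add: prod_monom_gen S_def)
    finally show "signof p * (\<Prod>i=0..<n. M $$ (i, p i)) = monom (of_int (sign p) * (\<Prod>i=0..<n. c i (p i))) (S p)"
      by (simp add: of_int_times_monom)
  qed
  finally show ?thesis by (simp add: coeff_sum f_def)
qed

lemma perm_lt: "p \<in> P \<Longrightarrow> i < n \<Longrightarrow> p i < n"
  using permutes_in_image[of p "{0..<n}" i] unfolding P_def by simp

lemma perm_fix: "p \<in> P \<Longrightarrow> \<not> i < n \<Longrightarrow> p i = i"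
  using permutes_not_in[of p "{0..<n}" i] unfolding P_def by simp

lemma S_ge: assumes "A \<subseteq> {0..<n}" shows "S p \<ge> sum (\<lambda>i. d i (p i)) A"
  unfolding S_def by (rule sum_mono2) (use assms in auto)

lemma S_id: "S id = 0" unfolding S_def by (simp add: diag)

lemma S_ge2: assumes p: "p \<in> P" "p \<noteq> id" shows "S p \<ge> 2"
proof -
  obtain i where i: "p i \<noteq> i" using p by (auto simp: fun_eq_iff)
  have ilt: "i < n" using i perm_fix[OF p(1)] by blast
  define j where "j = p i"
  have jlt: "j < n" using perm_lt[OF p(1) ilt] j_def by simp
  have pj: "p j \<noteq> j"
  proof
    assume "p j = j"
    hence "p j = p i" using j_def by simp
    moreover have "inj p" using p(1) unfolding P_def by (simp add: permutes_inj)
    ultimately have "j = i" by (simp add: inj_eq)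
    thus False using i unfolding j_def by simp
  qed
  have "S p \<ge> sum (\<lambda>i. d i (p i)) {i, j}" by (rule S_ge) (use ilt jlt in auto)
  also have "sum (\<lambda>i. d i (p i)) {i, j} = d i j + d j (p j)"
    using i j_def by simp
  moreover have "d i j \<ge> 1" using offd[OF ilt jlt] i unfolding j_def by simp
  moreover have "d j (p j) \<ge> 1" using offd[OF jlt perm_lt[OF p(1) jlt]] pj by simp
  ultimately show ?thesis by linarith
qed

lemma f_small: "k < 2 \<Longrightarrow> p \<in> P \<Longrightarrow> p \<noteq> id \<Longrightarrow> f k p = 0"
proof -
  assume "k < 2" "p \<in> P" "p \<noteq> id"
  hence "S p \<noteq> k" using S_ge2[of p] by linarith
  thus "f k p = 0" unfolding f_def by simp
qed

lemma idP: "id \<in> P" unfolding P_def by (simp add: permutes_id)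
lemma finP: "finite P" unfolding P_def by (simp add: finite_permutations)

lemma f_id: "f k id = (if k = 0 then 1 else 0)"
  by (simp add: f_def S_id diag)

lemma coeff_small: assumes "k < 2" shows "coeff (det M) k = (if k = 0 then 1 else 0)"
proof -
  have "coeff (det M) k = f k id + (\<Sum>p\<in>P - {id}. f k p)"
    unfolding coeff_det using sum.remove[OF finP idP] by simp
  also have "(\<Sum>p\<in>P - {id}. f k p) = 0" using f_small[OF assms] by (intro sum.neutral) auto
  finally show ?thesis by (simp only: f_id add_0_right)
qed

lemma coeff0: "coeff (det M) 0 = 1" using coeff_small[of 0] by simp
lemma coeff1: "coeff (det M) 1 = 0" using coeff_small[of 1] by simp

lemma S2_transp:
  assumes p: "p \<in> P" and S: "S p = 2"
  shows "\<exists>i j. i < j \<and> j < n \<and> p = transpose i j"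
proof -
  have "p \<noteq> id" using S S_id by auto
  then obtain i where i: "p i \<noteq> i" by (auto simp: fun_eq_iff)
  have ilt: "i < n" using i perm_fix[OF p] by blast
  define j where "j = p i"
  have jlt: "j < n" using perm_lt[OF p ilt] j_def by simp
  have inj: "inj p" using p unfolding P_def by (simp add: permutes_inj)
  have pj: "p j \<noteq> j"
  proof
    assume "p j = j"
    hence "p j = p i" using j_def by simp
    hence "j = i" using inj by (simp add: inj_eq)
    thus False using i unfolding j_def by simp
  qed
  have fixk: "p k = k" if k: "k \<noteq> i" "k \<noteq> j" for k
  proof (rule ccontr)
    assume pk: "p k \<noteq> k"
    have klt: "k < n" using perm_fix[OF p, of k] pk by auto
    have "S p \<ge> sum (\<lambda>i. d i (p i)) {i, j, k}" by (rule S_ge) (use ilt jlt klt in auto)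
    also have "sum (\<lambda>i. d i (p i)) {i, j, k} = d i j + d j (p j) + d k (p k)"
      using i j_def k by simp
    moreover have "d i j \<ge> 1" using offd[OF ilt jlt] i unfolding j_def by simp
    moreover have "d j (p j) \<ge> 1" using offd[OF jlt perm_lt[OF p jlt]] pj by simp
    moreover have "d k (p k) \<ge> 1" using offd[OF klt perm_lt[OF p klt]] pk by simp
    ultimately have "S p \<ge> 3" by linarith
    thus False using S by simp
  qed
  have pji: "p j = i"
  proof (rule ccontr)
    assume "p j \<noteq> i"
    hence "p (p j) = p j" using fixk[of "p j"] pj by simp
    hence "p j = j" using inj by (simp add: inj_eq)
    thus False using pj by simp
  qed
  have "p = transpose i j"
  proof
    fix k show "p k = transpose i j k"
      using fixk pji j_def by (cases "k = i"; cases "k = j") auto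
  qed
  moreover have "i \<noteq> j" using i j_def by simp
  ultimately show ?thesis
  proof (cases "i < j")
    case True
    show ?thesis by (rule exI[of _ i], rule exI[of _ j]) (use True jlt \<open>p = transpose i j\<close> in simp)
  next
    case False
    hence "j < i" using \<open>i \<noteq> j\<close> by simp
    moreover have "p = transpose j i" using \<open>p = transpose i j\<close> by (simp add: transpose_commute)
    ultimately show ?thesis by (intro exI[of _ j] exI[of _ i]) (use ilt in simp)
  qed
qed

definition Q where "Q = {(i,j). i < j \<and> j < n}"

lemma inj_transp: "inj_on (\<lambda>(i,j). transpose i j) Q"
proof (rule inj_onI, clarsimp simp: Q_def)
  fix i j i' j' :: nat
  assume a: "i < j" "j < n" "i' < j'" "j' < n" "transpose i j = transpose i' j'"
  have "transpose i' j' i = j" using a(5)[symmetric] by simp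
  hence "i = i' \<or> i = j'" using a(1) by (cases "i = i' \<or> i = j'") auto
  moreover have "transpose i' j' j = i" using a(5)[symmetric] by simp
  hence "j = i' \<or> j = j'" using a(1) by (cases "j = i' \<or> j = j'") auto
  ultimately show "i = i' \<and> j = j'" using a by auto
qed

lemma f_transp:
  assumes "i < j" "j < n"
  shows "f 2 (transpose i j) = (if d i j = 1 \<and> d j i = 1 then - (c i j * c j i) else 0)"
proof -
  let ?t = "transpose i j"
  have A: "{0..<n} = {i, j} \<union> ({0..<n} - {i, j})" using assms by auto
  have "S ?t = sum (\<lambda>k. d k (?t k)) {i,j} + sum (\<lambda>k. d k (?t k)) ({0..<n} - {i,j})"
    unfolding S_def by (subst A, subst sum.union_disjoint) auto
  also have "sum (\<lambda>k. d k (?t k)) ({0..<n} - {i,j}) = 0"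
    by (rule sum.neutral) (auto simp: diag)
  finally have S: "S ?t = d i j + d j i" using assms by simp
  have "(\<Prod>k=0..<n. c k (?t k)) = prod (\<lambda>k. c k (?t k)) {i,j} * prod (\<lambda>k. c k (?t k)) ({0..<n} - {i,j})"
    by (subst A, subst prod.union_disjoint) auto
  also have "prod (\<lambda>k. c k (?t k)) ({0..<n} - {i,j}) = 1"
    by (rule prod.neutral) (auto simp: diag)
  finally have Pr: "(\<Prod>k=0..<n. c k (?t k)) = c i j * c j i" using assms by simp
  have s: "sign ?t = -1" using assms by (simp add: sign_swap_id)
  have "d i j \<ge> 1" "d j i \<ge> 1" using offd assms by auto
  hence "(d i j + d j i = 2) = (d i j = 1 \<and> d j i = 1)" by auto
  thus ?thesis unfolding f_def S Pr s by simp
qed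

lemma coeff2: "coeff (det M) 2 = - (\<Sum>i<n. \<Sum>j\<in>{i<..<n}. if d i j = 1 \<and> d j i = 1 then c i j * c j i else 0)"
proof -
  let ?T = "(\<lambda>(i,j). transpose i j) ` Q"
  have TP: "?T \<subseteq> P" unfolding Q_def P_def by (auto intro!: permutes_swap_id)
  have "(\<Sum>p\<in>P. f 2 p) = (\<Sum>p\<in>?T. f 2 p)"
  proof (rule sum.mono_neutral_right[OF finP TP], rule ballI)
    fix p assume p: "p \<in> P - ?T"
    show "f 2 p = 0"
    proof (rule ccontr)
      assume "f 2 p \<noteq> 0"
      hence "S p = 2" unfolding f_def by (auto split: if_splits)
      then obtain i j where "i < j" "j < n" "p = transpose i j" using S2_transp p by blast
      hence "p \<in> ?T" unfolding Q_def by auto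
      thus False using p by simp
    qed
  qed
  also have "\<dots> = (\<Sum>q\<in>Q. f 2 ((\<lambda>(i,j). transpose i j) q))"
    using sum.reindex[OF inj_transp, of "f 2"] by (simp add: comp_def)
  also have "\<dots> = (\<Sum>(i,j)\<in>Q. (if d i j = 1 \<and> d j i = 1 then - (c i j * c j i) else 0))"
    by (rule sum.cong[OF refl]) (auto simp: Q_def f_transp)
  also have "Q = Sigma {..<n} (\<lambda>i. {i<..<n})" unfolding Q_def by auto
  also have "(\<Sum>(i,j)\<in>Sigma {..<n} (\<lambda>i. {i<..<n}). (if d i j = 1 \<and> d j i = 1 then - (c i j * c j i) else 0))
     = (\<Sum>i<n. \<Sum>j\<in>{i<..<n}. (if d i j = 1 \<and> d j i = 1 then - (c i j * c j i) else 0))"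
    by (rule sum.Sigma[symmetric]) auto
  finally have "coeff (det M) 2 = (\<Sum>i<n. \<Sum>j\<in>{i<..<n}. (if d i j = 1 \<and> d j i = 1 then - (c i j * c j i) else 0))"
    unfolding coeff_det .
  also have "\<dots> = (\<Sum>i<n. \<Sum>j\<in>{i<..<n}. - (if d i j = 1 \<and> d j i = 1 then c i j * c j i else 0))"
    by (intro sum.cong refl) simp
  finally show ?thesis by (simp only: sum_negf)
qed

end

lemma coprime_smult_left:
  fixes r :: "'a::field poly"
  assumes "c \<noteq> 0" "coprime r m" shows "coprime (smult c r) m"
proof (rule coprimeI)
  fix d assume "d dvd smult c r" "d dvd m"
  hence "d dvd r" using assms(1) by (simp add: dvd_smult_iff)
  thus "is_unit d" using coprime_common_divisor[OF assms(2) _ \<open>d dvd m\<close>] by blast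
qed

lemma bezout_gen:
  fixes a b :: "'b::euclidean_ring"
  shows "\<exists>x y d. x * a + y * b = d \<and> d dvd a \<and> d dvd b"
proof (induction b arbitrary: a rule: measure_induct_rule[where f=euclidean_size])
  case (less b)
  show ?case
  proof (cases "b = 0")
    case True then show ?thesis by (intro exI[of _ 1] exI[of _ 0] exI[of _ a]) simp
  next
    case False
    hence "euclidean_size (a mod b) < euclidean_size b" by (rule mod_size_less)
    then obtain x y d where h: "x * b + y * (a mod b) = d" "d dvd b" "d dvd a mod b"
      using less[of "a mod b" b] by blast
    have e: "x * b + y * (a - (a div b) * b) = d" using h(1) by (simp only: minus_div_mult_eq_mod)
    have "y * a + (x - y * (a div b)) * b = x * b + y * (a - (a div b) * b)" by (simp add: algebra_simps)
    hence "y * a + (x - y * (a div b)) * b = d" using e by simp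
    moreover have "d dvd a" using dvd_mod_iff[OF h(2), of a] h(3) by simp
    ultimately show ?thesis using h(2) by blast
  qed
qed

lemma bezout_coprime:
  fixes a b :: "'b::euclidean_ring"
  assumes "coprime a b" shows "\<exists>x y. x * a + y * b = 1"
proof -
  obtain x y d where h: "x * a + y * b = d" "d dvd a" "d dvd b" using bezout_gen by blast
  have "is_unit d" using coprime_common_divisor[OF assms h(2,3)] .
  then obtain k where k: "1 = d * k" by (rule dvdE)
  have "(k * x) * a + (k * y) * b = k * (x * a + y * b)" by (simp add: algebra_simps)
  also have "\<dots> = 1" using h(1) k by (simp add: mult.commute)
  finally have "(k * x) * a + (k * y) * b = 1" .
  thus ?thesis by blast
qed

locale pc =
  fixes m :: "'a::{finite,field} poly"
  assumes dm: "degree m > 1"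
begin

abbreviation "U \<equiv> unit_reps m"
abbreviation "MU \<equiv> monic_unit_reps m"
abbreviation "iv \<equiv> inv_rep m"
abbreviation "qt \<equiv> quot_rep m"

lemma m0: "m \<noteq> 0" using dm by auto

lemma U_iff: "r \<in> U \<longleftrightarrow> degree r < degree m \<and> coprime r m"
  unfolding unit_reps_def by simp

lemma MU_iff: "r \<in> MU \<longleftrightarrow> r \<in> U \<and> lead_coeff r = 1"
  unfolding monic_unit_reps_def by simp

lemma not_coprime0: "\<not> coprime 0 m"
proof
  assume "coprime 0 m"
  hence "is_unit m" by simp
  hence "degree m = 0" using is_unit_iff_degree[OF m0] by simp
  thus False using dm by simp
qed

lemma U_nz: assumes "r \<in> U" shows "r \<noteq> 0"
proof
  assume "r = 0"
  moreover have "coprime r m" using assms by (simp add: U_iff)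
  ultimately show False using not_coprime0 by simp
qed

lemma mod_small: "degree x < degree m \<Longrightarrow> x mod m = x" by (rule mod_poly_less)

lemma U_mod: assumes "r \<in> U" shows "r mod m = r"
proof -
  have "degree r < degree m" using assms by (simp add: U_iff)
  thus ?thesis by (rule mod_small)
qed

lemma one_mod: "1 mod m = (1 :: 'a poly)" using dm by (intro mod_small) simp

lemma one_U: "1 \<in> U" unfolding U_iff using dm by simp

lemma mod_in_U: assumes "coprime x m" shows "x mod m \<in> U"
proof -
  have c: "coprime (x mod m) m" using assms by (simp add: coprime_mod_left_iff[OF m0])
  have "x mod m \<noteq> 0"
  proof
    assume "x mod m = 0"
    thus False using c not_coprime0 by simp
  qed
  hence "degree (x mod m) < degree m" by (rule degree_mod_less'[OF m0])
  thus ?thesis using c by (simp add: U_iff)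
qed

lemma inv_ex1: assumes r: "r \<in> U" shows "\<exists>!s. s \<in> U \<and> (r * s) mod m = 1"
proof -
  obtain x y where b: "x * r + y * m = 1" using bezout_coprime r U_iff by blast
  define s where "s = x mod m"
  have rs: "(r * s) mod m = 1"
  proof -
    have "(r * s) mod m = (r * x) mod m" unfolding s_def by (simp add: mod_mult_right_eq)
    also have "r * x = 1 - y * m" using b by (simp add: algebra_simps)
    also have "(1 - y * m) mod m = 1 mod m" by (simp add: mod_eq_dvd_iff)
    finally show ?thesis using one_mod by simp
  qed
  have sU: "s \<in> U"
  proof -
    have "(x * r) mod m = (r * x) mod m" by (simp only: mult.commute)
    also have "\<dots> = (r * s) mod m" unfolding s_def by (rule mod_mult_right_eq[symmetric])
    finally have "(x * r) mod m = 1" using rs by simp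
    hence "coprime x m" by (rule invertible_coprime)
    thus ?thesis unfolding s_def by (rule mod_in_U)
  qed
  show ?thesis
  proof (rule ex1I[of _ s])
    show "s \<in> U \<and> r * s mod m = 1" using sU rs by simp
    fix s' assume s': "s' \<in> U \<and> r * s' mod m = 1"
    have "s' = s' mod m" using U_mod s' by simp
    also have "\<dots> = (s' * ((r * s) mod m)) mod m" using rs by simp
    also have "\<dots> = (s' * (r * s)) mod m" by (rule mod_mult_right_eq)
    also have "s' * (r * s) = s * (r * s')" by (simp only: mult.commute mult.left_commute)
    also have "(s * (r * s')) mod m = (s * ((r * s') mod m)) mod m" by (rule mod_mult_right_eq[symmetric])
    also have "\<dots> = s mod m" using s' by simp
    also have "\<dots> = s" using U_mod sU by simp
    finally show "s' = s" .
  qed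
qed

lemma iv_props: assumes "r \<in> U" shows "iv r \<in> U" "(r * iv r) mod m = 1"
proof -
  have "iv r \<in> U \<and> (r * iv r) mod m = 1"
    unfolding inv_rep_def by (rule theI'[OF inv_ex1[OF assms]])
  thus "iv r \<in> U" "(r * iv r) mod m = 1" by auto
qed

lemma iv_unique: assumes "r \<in> U" "s \<in> U" "(r * s) mod m = 1" shows "iv r = s"
  unfolding inv_rep_def by (rule the1_equality[OF inv_ex1[OF assms(1)]]) (use assms in simp)

lemma qt_U: assumes "a \<in> U" "b \<in> U" shows "qt a b \<in> U"
proof -
  have "(a * iv b) * (iv a * b) = (a * iv a) * (b * iv b)" by (simp only: mult.commute mult.left_commute)
  hence "((a * iv b) * (iv a * b)) mod m = (((a * iv a) mod m) * ((b * iv b) mod m)) mod m"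
    by (simp only: mod_mult_eq)
  also have "\<dots> = 1" using iv_props(2)[OF assms(1)] iv_props(2)[OF assms(2)] one_mod by simp
  finally have "coprime (a * iv b) m" by (rule invertible_coprime)
  thus ?thesis unfolding quot_rep_def by (rule mod_in_U)
qed

lemma qt_self: "a \<in> U \<Longrightarrow> qt a a = 1"
  unfolding quot_rep_def using iv_props(2) by simp

lemma qt_mul: assumes "a \<in> U" "b \<in> U" shows "(qt a b * b) mod m = a"
proof -
  have "(qt a b * b) mod m = (a * iv b * b) mod m" unfolding quot_rep_def by (simp add: mod_mult_left_eq)
  also have "\<dots> = (a * ((b * iv b) mod m)) mod m" by (simp add: mod_mult_right_eq ac_simps)
  also have "\<dots> = a" using iv_props(2)[OF assms(2)] U_mod[OF assms(1)] by simp
  finally show ?thesis .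
qed

lemma qt_pair: assumes "a \<in> U" "b \<in> U" shows "(qt a b * qt b a) mod m = 1"
proof -
  have "(qt a b * qt b a) mod m = ((a * iv b) * (b * iv a)) mod m"
    unfolding quot_rep_def by (simp add: mod_mult_eq)
  also have "\<dots> = (((a * iv a) mod m) * ((b * iv b) mod m)) mod m"
    by (simp add: mod_mult_eq ac_simps)
  also have "\<dots> = 1" using iv_props(2)[OF assms(1)] iv_props(2)[OF assms(2)] one_mod by simp
  finally show ?thesis .
qed

lemma iv_qt: assumes "a \<in> U" "b \<in> U" shows "iv (qt a b) = qt b a"
  by (rule iv_unique) (use qt_U assms qt_pair in auto)

lemma deg_off: assumes a: "a \<in> MU" and b: "b \<in> MU" and ab: "a \<noteq> b"
  shows "degree (qt a b) \<ge> 1"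
proof (rule ccontr)
  assume "\<not> degree (qt a b) \<ge> 1"
  hence d0: "degree (qt a b) = 0" by simp
  define c where "c = coeff (qt a b) 0"
  have q: "qt a b = [:c:]" unfolding c_def using degree_0_id[OF d0] by simp
  have aU: "a \<in> U" and bU: "b \<in> U" using a b MU_iff by auto
  have e: "qt a b * b = smult c b" unfolding q by simp
  have "degree (smult c b) \<le> degree b" by (rule degree_smult_le)
  hence "degree (smult c b) < degree m" using bU U_iff by simp
  hence "(smult c b) mod m = smult c b" by (rule mod_small)
  hence "(qt a b * b) mod m = qt a b * b" using e by simp
  hence "qt a b * b = a" using qt_mul[OF aU bU] by simp
  hence ac: "smult c b = a" using e by simp
  have "lead_coeff (smult c b) = c" using b MU_iff by (simp add: lead_coeff_smult)
  hence "c = 1" using ac a MU_iff by simp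
  thus False using ac ab by simp
qed

lemma deg_gt2: assumes a: "a \<in> U" and b: "b \<in> U" and d: "degree m > 2"
  shows "\<not> (degree (qt a b) = 1 \<and> degree (qt b a) = 1)"
proof
  assume h: "degree (qt a b) = 1 \<and> degree (qt b a) = 1"
  have nz: "qt a b \<noteq> 0" "qt b a \<noteq> 0" using U_nz qt_U a b by auto
  have "degree (qt a b * qt b a) = 2" using degree_mult_eq[OF nz] h by simp
  hence "(qt a b * qt b a) mod m = qt a b * qt b a" using d mod_small by simp
  hence "qt a b * qt b a = 1" using qt_pair[OF a b] by simp
  thus False using \<open>degree (qt a b * qt b a) = 2\<close> by simp
qed

lemma smult_U: "c \<noteq> 0 \<Longrightarrow> r \<in> U \<Longrightarrow> smult c r \<in> U"
  unfolding U_iff using coprime_smult_left by auto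

lemma iv_smult: assumes "c \<noteq> 0" "r \<in> U" shows "iv (smult c r) = smult (inverse c) (iv r)"
proof (rule iv_unique)
  show "smult c r \<in> U" using smult_U assms by blast
  show "smult (inverse c) (iv r) \<in> U" using smult_U assms iv_props(1) by simp
  show "(smult c r * smult (inverse c) (iv r)) mod m = 1"
    using iv_props(2)[OF assms(2)] assms(1) by (simp add: mult.commute[of "iv r"])
qed

definition nrm :: "'a poly \<Rightarrow> 'a poly" where "nrm r = smult (inverse (lead_coeff r)) r"

lemma nrm_MU: "r \<in> U \<Longrightarrow> nrm r \<in> MU"
  unfolding MU_iff nrm_def using U_nz smult_U by (auto simp: lead_coeff_smult)

lemma nrm_monic: "lead_coeff r = 1 \<Longrightarrow> nrm r = r" unfolding nrm_def by simp

lemma iv_nrm_lc: assumes a: "a \<in> U" and b: "b \<in> U"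
  shows "lead_coeff (iv (nrm (qt a b))) = lead_coeff (qt a b) * lead_coeff (qt b a)"
proof -
  have qU: "qt a b \<in> U" using qt_U a b by blast
  have l0: "lead_coeff (qt a b) \<noteq> 0" using U_nz[OF qU] by simp
  have "iv (nrm (qt a b)) = smult (lead_coeff (qt a b)) (qt b a)"
    unfolding nrm_def using iv_smult[OF _ qU] l0 iv_qt[OF a b] by simp
  thus ?thesis by (simp add: lead_coeff_smult)
qed

lemma one_MU: "1 \<in> MU" using one_U MU_iff by simp

lemma iv_one: "iv 1 = 1" by (rule iv_unique) (use one_U one_mod in auto)

lemma mul_U: assumes "a \<in> U" "b \<in> U" shows "(a * b) mod m \<in> U"
proof -
  have "(a * b) * (iv a * iv b) = (a * iv a) * (b * iv b)" by (simp only: mult.commute mult.left_commute)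
  hence "((a * b) * (iv a * iv b)) mod m = (((a * iv a) mod m) * ((b * iv b) mod m)) mod m"
    by (simp only: mod_mult_eq)
  also have "\<dots> = 1" using iv_props(2)[OF assms(1)] iv_props(2)[OF assms(2)] one_mod by simp
  finally have "coprime (a * b) m" by (rule invertible_coprime)
  thus ?thesis by (rule mod_in_U)
qed

lemma qt_smult: "qt (smult c x) b = smult c (qt x b)"
  unfolding quot_rep_def by (simp add: mod_smult_left)

lemma nrm_smult: assumes "c \<noteq> 0" shows "nrm (smult c x) = nrm x"
proof -
  have "inverse c * inverse (lead_coeff x) * c = (inverse c * c) * inverse (lead_coeff x)"
    by (simp only: ac_simps)
  also have "\<dots> = inverse (lead_coeff x)" using assms by simp
  finally have e: "inverse c * inverse (lead_coeff x) * c = inverse (lead_coeff x)" .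
  show ?thesis unfolding nrm_def using assms by (simp add: lead_coeff_smult e)
qed

lemma smult_nrm: assumes "x \<noteq> 0" shows "smult (lead_coeff x) (nrm x) = x"
  unfolding nrm_def using assms by simp

lemma qt_mulmod: assumes g: "g \<in> U" and b: "b \<in> U" shows "qt ((g * b) mod m) b = g"
proof -
  have "qt ((g * b) mod m) b = (((g * b) mod m) * iv b) mod m" unfolding quot_rep_def ..
  also have "\<dots> = ((g * b) * iv b) mod m" by (rule mod_mult_left_eq)
  also have "(g * b) * iv b = g * (b * iv b)" by (simp only: mult.assoc)
  also have "(g * (b * iv b)) mod m = (g * ((b * iv b) mod m)) mod m" by (rule mod_mult_right_eq[symmetric])
  also have "\<dots> = g" using iv_props(2)[OF b] U_mod[OF g] by simp
  finally show ?thesis .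
qed

lemma count_lemma:
  assumes b: "b \<in> MU" and fin: "finite MU"
  shows "card {a \<in> MU. a \<noteq> b \<and> lead_coeff (qt a b) * lead_coeff (qt b a) = 1} = C_m m - 1"
proof -
  let ?A = "{a \<in> MU. a \<noteq> b \<and> lead_coeff (qt a b) * lead_coeff (qt b a) = 1}"
  let ?B = "{r \<in> MU. lead_coeff (iv r) = 1}"
  have bU: "b \<in> U" using b MU_iff by simp
  define \<phi> where "\<phi> = (\<lambda>a. nrm (qt a b))"
  define \<psi> where "\<psi> = (\<lambda>g. nrm ((g * b) mod m))"
  have \<phi>\<psi>: "\<phi> (\<psi> g) = g" if g: "g \<in> MU" for g
  proof -
    have gU: "g \<in> U" using g MU_iff by simp
    have xU: "(g * b) mod m \<in> U" using mul_U[OF gU bU] .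
    define x where "x = (g * b) mod m"
    have x0: "lead_coeff x \<noteq> 0" using U_nz xU x_def by simp
    have "\<psi> g = smult (inverse (lead_coeff x)) x" unfolding \<psi>_def nrm_def x_def ..
    hence "qt (\<psi> g) b = smult (inverse (lead_coeff x)) g"
      using qt_smult qt_mulmod[OF gU bU] x_def by simp
    hence "\<phi> (\<psi> g) = nrm g" unfolding \<phi>_def using x0 by (simp add: nrm_smult)
    also have "\<dots> = g" using g MU_iff nrm_monic by simp
    finally show ?thesis .
  qed
  have bij: "bij_betw \<phi> ?A (?B - {1})"
  proof (rule bij_betw_byWitness[where f'=\<psi>])
    show "\<forall>a\<in>?A. \<psi> (\<phi> a) = a"
    proof
      fix a assume "a \<in> ?A"
      hence a: "a \<in> MU" by simp
      hence aU: "a \<in> U" using MU_iff by simp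
      have qU: "qt a b \<in> U" using qt_U[OF aU bU] .
      have l0: "lead_coeff (qt a b) \<noteq> 0" using U_nz[OF qU] by simp
      have "\<phi> a = smult (inverse (lead_coeff (qt a b))) (qt a b)" unfolding \<phi>_def nrm_def ..
      hence "(\<phi> a * b) mod m = smult (inverse (lead_coeff (qt a b))) a"
        using qt_mul[OF aU bU] by (simp add: mod_smult_left)
      hence "\<psi> (\<phi> a) = nrm a" unfolding \<psi>_def using l0 by (simp add: nrm_smult)
      thus "\<psi> (\<phi> a) = a" using a MU_iff nrm_monic by simp
    qed
    show "\<forall>g\<in>?B - {1}. \<phi> (\<psi> g) = g" using \<phi>\<psi> by simp
    show "\<phi> ` ?A \<subseteq> ?B - {1}"
    proof
      fix g assume "g \<in> \<phi> ` ?A"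
      then obtain a where a: "a \<in> MU" "a \<noteq> b" "lead_coeff (qt a b) * lead_coeff (qt b a) = 1"
        and g: "g = \<phi> a" by blast
      have aU: "a \<in> U" using a MU_iff by simp
      have qU: "qt a b \<in> U" using qt_U[OF aU bU] .
      have gMU: "g \<in> MU" unfolding g \<phi>_def by (rule nrm_MU[OF qU])
      have "lead_coeff (iv g) = 1" unfolding g \<phi>_def using iv_nrm_lc[OF aU bU] a(3) by simp
      moreover have "g \<noteq> 1"
      proof
        assume "g = 1"
        hence "qt a b = smult (lead_coeff (qt a b)) 1"
          using smult_nrm[OF U_nz[OF qU]] unfolding g \<phi>_def by simp
        hence "degree (qt a b) = 0" by (metis degree_1 degree_smult_le le_zero_eq)
        thus False using deg_off[OF a(1) b a(2)] by simp
      qed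
      ultimately show "g \<in> ?B - {1}" using gMU by simp
    qed
    show "\<psi> ` (?B - {1}) \<subseteq> ?A"
    proof
      fix a assume "a \<in> \<psi> ` (?B - {1})"
      then obtain g where g: "g \<in> MU" "lead_coeff (iv g) = 1" "g \<noteq> 1" and a: "a = \<psi> g" by blast
      have gU: "g \<in> U" using g MU_iff by simp
      have aMU: "a \<in> MU" unfolding a \<psi>_def by (rule nrm_MU[OF mul_U[OF gU bU]])
      hence aU: "a \<in> U" using MU_iff by simp
      have pa: "\<phi> a = g" unfolding a using \<phi>\<psi>[OF g(1)] .
      have "a \<noteq> b"
      proof
        assume "a = b"
        hence "\<phi> a = nrm 1" unfolding \<phi>_def using qt_self[OF bU] by simp
        hence "g = 1" using pa nrm_monic[of 1] by simp
        thus False using g(3) by simp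
      qed
      moreover have "lead_coeff (qt a b) * lead_coeff (qt b a) = 1"
        using iv_nrm_lc[OF aU bU] pa g(2) unfolding \<phi>_def by simp
      ultimately show "a \<in> ?A" using aMU by simp
    qed
  qed
  have "card ?A = card (?B - {1})" using bij_betw_same_card[OF bij] .
  also have "\<dots> = card ?B - 1"
  proof -
    have "1 \<in> ?B" using one_MU iv_one by simp
    moreover have "finite ?B" using fin by simp
    ultimately show ?thesis by (simp add: card_Diff_singleton)
  qed
  finally show ?thesis unfolding C_m_def .
qed

lemma card_U: "card U = (card (UNIV :: 'a set) - 1) * card MU"
proof -
  have bij: "bij_betw (\<lambda>r. (lead_coeff r, nrm r)) U ((UNIV - {0}) \<times> MU)"
  proof (rule bij_betw_byWitness[where f'="\<lambda>(c, a). smult c a"])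
    show "\<forall>r\<in>U. (case (lead_coeff r, nrm r) of (c, a) \<Rightarrow> smult c a) = r"
      using smult_nrm U_nz by simp
    show "\<forall>p\<in>(UNIV - {0}) \<times> MU. (lead_coeff (case p of (c, a) \<Rightarrow> smult c a), nrm (case p of (c, a) \<Rightarrow> smult c a)) = p"
      using MU_iff nrm_smult nrm_monic by (auto simp: lead_coeff_smult)
    show "(\<lambda>r. (lead_coeff r, nrm r)) ` U \<subseteq> (UNIV - {0}) \<times> MU"
      using U_nz nrm_MU by auto
    show "(\<lambda>(c, a). smult c a) ` ((UNIV - {0}) \<times> MU) \<subseteq> U"
      using smult_U MU_iff by auto
  qed
  have "card U = card ((UNIV - {0::'a}) \<times> MU)" using bij_betw_same_card[OF bij] .
  also have "\<dots> = (card (UNIV :: 'a set) - 1) * card MU" by (simp add: card_cartesian_product card_Diff_singleton)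
  finally show ?thesis .
qed

end

lemma card_field_ge2: "card (UNIV::'a::{finite,field} set) \<ge> 2"
proof -
  have "card {0::'a, 1} \<le> card (UNIV::'a set)" by (rule card_mono) auto
  thus ?thesis by simp
qed

lemma fermat_field:
  fixes x :: "'a::{finite,field}"
  assumes x: "x \<noteq> 0"
  shows "x ^ (card (UNIV::'a set) - 1) = 1"
proof -
  let ?S = "UNIV - {0::'a}"
  have cS: "card ?S = card (UNIV::'a set) - 1" by (simp add: card_Diff_singleton)
  have bij: "bij_betw (\<lambda>y. x * y) ?S ?S"
    unfolding bij_betw_def
  proof
    show "inj_on (\<lambda>y. x * y) ?S" using x by (auto simp: inj_on_def)
    show "(\<lambda>y. x * y) ` ?S = ?S"
    proof
      show "(\<lambda>y. x * y) ` ?S \<subseteq> ?S" using x by auto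
      show "?S \<subseteq> (\<lambda>y. x * y) ` ?S"
      proof
        fix z assume "z \<in> ?S"
        hence "z = x * (z / x)" "z / x \<in> ?S" using x by auto
        thus "z \<in> (\<lambda>y. x * y) ` ?S" by blast
      qed
    qed
  qed
  have "prod (\<lambda>y. x * y) ?S = prod (\<lambda>y. y) ?S"
    using prod.reindex_bij_betw[OF bij, of "\<lambda>y. y"] by simp
  moreover have "prod (\<lambda>y. x * y) ?S = x ^ card ?S * prod (\<lambda>y. y) ?S"
    by (simp add: prod.distrib)
  moreover have "prod (\<lambda>y. y) ?S \<noteq> 0" by simp
  ultimately show ?thesis using cS by simp
qed

definition tring :: "'a::field ring" where
  "tring = \<lparr>carrier = UNIV, monoid.mult = (\<lambda>x y. x * y), one = 1, ring.zero = 0, add = (\<lambda>x y. x + y)\<rparr>"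

lemma cring_tring: "cring (tring :: 'a::field ring)"
proof (rule cringI)
  show "abelian_group (tring :: 'a ring)"
  proof (rule abelian_groupI)
    fix x :: 'a
    show "\<exists>y\<in>carrier tring. y \<oplus>\<^bsub>tring\<^esub> x = \<zero>\<^bsub>tring\<^esub>"
      by (rule bexI[of _ "- x"]) (simp_all add: tring_def)
  qed (simp_all add: tring_def algebra_simps)
  show "comm_monoid (tring :: 'a ring)"
    by (rule comm_monoidI) (simp_all add: tring_def algebra_simps)
qed (simp add: tring_def algebra_simps)

lemma field_tring: "field (tring :: 'a::field ring)"
proof (rule cring.cring_fieldI2[OF cring_tring])
  show "\<zero>\<^bsub>tring\<^esub> \<noteq> (\<one>\<^bsub>tring\<^esub> :: 'a)" by (simp add: tring_def)
  fix a :: 'a assume "a \<noteq> \<zero>\<^bsub>tring\<^esub>"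
  hence "a \<noteq> 0" by (simp add: tring_def)
  thus "\<exists>b\<in>carrier tring. a \<otimes>\<^bsub>tring\<^esub> b = \<one>\<^bsub>tring\<^esub>"
    by (intro bexI[of _ "inverse a"]) (simp_all add: tring_def)
qed

lemma tring_pow: "(a::'a::field) [^]\<^bsub>tring\<^esub> (i::nat) = a ^ i"
  by (induct i) (simp_all add: nat_pow_def tring_def)

lemma field_gen:
  "\<exists>g::'a::{finite,field}. g \<noteq> 0 \<and> (\<forall>x. x \<noteq> 0 \<longrightarrow> (\<exists>i. x = g ^ i))"
proof -
  have fin: "finite (carrier (tring :: 'a ring))" by (simp add: tring_def)
  obtain a where a: "a \<in> carrier (mult_of (tring :: 'a ring))"
    and c: "carrier (mult_of (tring :: 'a ring)) = {a [^]\<^bsub>tring\<^esub> i |i::nat. i \<in> UNIV}"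
    using field.finite_field_mult_group_has_gen[OF field_tring fin] by blast
  have cc: "carrier (mult_of (tring :: 'a ring)) = UNIV - {0}"
    unfolding carrier_mult_of by (simp add: tring_def)
  show ?thesis
  proof (rule exI[of _ a], intro conjI allI impI)
    show "a \<noteq> 0" using a unfolding cc by simp
    fix x :: 'a assume x: "x \<noteq> 0"
    have "x \<in> carrier (mult_of (tring :: 'a ring))" unfolding cc using x by simp
    hence "x \<in> {a [^]\<^bsub>tring\<^esub> i |i::nat. i \<in> UNIV}" unfolding c .
    then obtain i :: nat where "x = a [^]\<^bsub>tring\<^esub> i" by blast
    hence "x = a ^ i" by (simp add: tring_pow)
    thus "\<exists>i. x = a ^ i" by blast
  qed
qed


lemma pow_mod_eq: "(w::'b::monoid_mult) ^ n = 1 \<Longrightarrow> w ^ (k mod n) = w ^ k"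
proof -
  assume w: "w ^ n = 1"
  have "w ^ k = w ^ (n * (k div n) + k mod n)" by simp
  also have "\<dots> = (w ^ n) ^ (k div n) * w ^ (k mod n)" by (simp only: power_add power_mult)
  finally show ?thesis using w by simp
qed

definition triv_char :: "'a::{finite,field} \<Rightarrow> complex" where
  "triv_char x = (if x = 0 then 0 else 1)"

lemma triv_char_in: "triv_char \<in> characters"
  unfolding characters_def triv_char_def by auto

lemma exists_char:
  fixes z :: "'a::{finite,field}"
  assumes z0: "z \<noteq> 0" and z1: "z \<noteq> 1"
  shows "\<exists>\<psi>\<in>characters. \<psi> z \<noteq> 1"
proof -
  define n where "n = card (UNIV::'a set) - 1"
  have n2: "n \<ge> 1" using card_field_ge2[where 'a='a] unfolding n_def by linarith
  obtain g :: 'a where g0: "g \<noteq> 0" and gen: "\<And>x. x \<noteq> 0 \<Longrightarrow> \<exists>i. x = g ^ i"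
    using field_gen by blast
  have gn: "g ^ n = 1" unfolding n_def by (rule fermat_field[OF g0])
  define G where "G = (\<lambda>i. g ^ i)"
  have img: "G ` {..<n} = UNIV - {0}"
  proof
    show "G ` {..<n} \<subseteq> UNIV - {0}" using g0 by (auto simp: G_def)
    show "UNIV - {0} \<subseteq> G ` {..<n}"
    proof
      fix x :: 'a assume "x \<in> UNIV - {0}"
      then obtain i where "x = g ^ i" using gen by blast
      hence "x = G (i mod n)" unfolding G_def using pow_mod_eq[OF gn] by simp
      moreover have "i mod n < n" using n2 by simp
      ultimately show "x \<in> G ` {..<n}" by blast
    qed
  qed
  have "card (G ` {..<n}) = card (UNIV - {0::'a})" using img by simp
  also have "\<dots> = n" unfolding n_def by (simp add: card_Diff_singleton)
  finally have "card (G ` {..<n}) = n" .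
  hence inj: "inj_on G {..<n}" by (simp add: eq_card_imp_inj_on)
  define dl where "dl = (\<lambda>x. inv_into {..<n} G x)"
  have dl_lt: "x \<noteq> 0 \<Longrightarrow> dl x < n" for x
    unfolding dl_def using img by (metis DiffI UNIV_I empty_iff inv_into_into insert_iff lessThan_iff)
  have dl_G: "x \<noteq> 0 \<Longrightarrow> G (dl x) = x" for x
    unfolding dl_def using img by (metis DiffI UNIV_I empty_iff f_inv_into_f insert_iff)
  have dl_uniq: "i < n \<Longrightarrow> G i = x \<Longrightarrow> dl x = i" for i x
    unfolding dl_def using inj by (metis inv_into_f_f lessThan_iff)
  define w where "w = cis (2 * pi / real n)"
  have wn: "w ^ n = 1" unfolding w_def DeMoivre using n2 by simp
  have wk: "w ^ k \<noteq> 1" if k: "0 < k" "k < n" for k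
  proof
    assume "w ^ k = 1"
    hence c1: "cis (real k * (2 * pi / real n)) = 1" unfolding w_def DeMoivre .
    have "cos (real k * (2 * pi / real n)) = 1" using arg_cong[where f=Re, OF c1] by simp
    then obtain j :: int where j: "real k * (2 * pi / real n) = real_of_int j * 2 * pi"
      unfolding cos_one_2pi_int by blast
    hence "real k = real_of_int j * real n" using n2 by (simp add: field_simps)
    hence kj: "int k = j * int n" by (metis of_int_eq_iff of_int_mult of_int_of_nat_eq)
    have "j > 0" using kj k by (smt (verit) mult_nonpos_nonneg of_nat_0_le_iff of_nat_0_less_iff)
    hence "int k \<ge> int n" using kj by (simp add: mult_le_cancel_right1)
    thus False using k by simp
  qed
  define \<psi> where "\<psi> = (\<lambda>x. if x = 0 then 0 else w ^ dl x)"
  have dl1: "dl 1 = 0" using dl_uniq[of 0 1] n2 by (simp add: G_def)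
  have dlmul: "dl (x * y) = (dl x + dl y) mod n" if "x \<noteq> 0" "y \<noteq> 0" for x y
  proof (rule dl_uniq)
    show "(dl x + dl y) mod n < n" using n2 by simp
    have "G ((dl x + dl y) mod n) = g ^ (dl x + dl y)" unfolding G_def using pow_mod_eq[OF gn] by simp
    also have "\<dots> = G (dl x) * G (dl y)" by (simp add: G_def power_add)
    finally show "G ((dl x + dl y) mod n) = x * y" using dl_G that by simp
  qed
  have "\<psi> \<in> characters"
    unfolding characters_def
  proof (intro CollectI conjI allI impI)
    show "\<psi> 0 = 0" by (simp add: \<psi>_def)
    show "\<psi> 1 = 1" by (simp add: \<psi>_def dl1)
    fix x y :: 'a assume "x \<noteq> 0" "y \<noteq> 0"
    thus "\<psi> (x * y) = \<psi> x * \<psi> y"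
      by (simp add: \<psi>_def dlmul pow_mod_eq[OF wn] power_add)
  qed
  moreover have "\<psi> z \<noteq> 1"
  proof -
    have "dl z \<noteq> 0"
    proof
      assume "dl z = 0"
      hence "z = 1" using dl_G[OF z0] by (simp add: G_def)
      thus False using z1 by simp
    qed
    hence "w ^ dl z \<noteq> 1" using wk dl_lt[OF z0] by simp
    thus ?thesis using z0 by (simp add: \<psi>_def)
  qed
  ultimately show ?thesis by blast
qed

lemma char_0: "\<chi> \<in> characters \<Longrightarrow> \<chi> 0 = 0" unfolding characters_def by simp
lemma char_1: "\<chi> \<in> characters \<Longrightarrow> \<chi> 1 = 1" unfolding characters_def by simp
lemma char_mult: "\<chi> \<in> characters \<Longrightarrow> x \<noteq> 0 \<Longrightarrow> y \<noteq> 0 \<Longrightarrow> \<chi> (x * y) = \<chi> x * \<chi> y"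
  unfolding characters_def by simp

lemma char_nz: assumes "\<chi> \<in> characters" "x \<noteq> 0" shows "\<chi> x \<noteq> 0"
proof
  assume "\<chi> x = 0"
  moreover have "\<chi> 1 = \<chi> x * \<chi> (inverse x)"
    using char_mult[OF assms(1) assms(2), of "inverse x"] assms(2) by simp
  ultimately show False using char_1[OF assms(1)] by simp
qed

lemma char_inverse: assumes "\<chi> \<in> characters" "x \<noteq> 0" shows "inverse (\<chi> x) = \<chi> (inverse x)"
proof -
  have "\<chi> x * \<chi> (inverse x) = 1"
    using char_mult[OF assms(1) assms(2), of "inverse x"] assms char_1[OF assms(1)] by simp
  thus ?thesis by (simp add: inverse_unique)
qed

lemma char_sum_nontriv:
  fixes \<chi> :: "'a::{finite,field} \<Rightarrow> complex"
  assumes ch: "\<chi> \<in> characters" and x: "x \<noteq> 0" "\<chi> x \<noteq> 1"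
  shows "(\<Sum>y\<in>UNIV - {0}. \<chi> y) = 0"
proof -
  let ?S = "UNIV - {0::'a}"
  have bij: "bij_betw (\<lambda>y. x * y) ?S ?S"
    by (rule bij_betw_byWitness[where f'="\<lambda>y. y / x"]) (use x in auto)
  have "(\<Sum>y\<in>?S. \<chi> y) = (\<Sum>y\<in>?S. \<chi> (x * y))"
    using sum.reindex_bij_betw[OF bij, of \<chi>] by simp
  also have "\<dots> = \<chi> x * (\<Sum>y\<in>?S. \<chi> y)"
    by (simp add: sum_distrib_left char_mult[OF ch x(1)])
  finally have "(1 - \<chi> x) * (\<Sum>y\<in>?S. \<chi> y) = 0" by (simp add: algebra_simps)
  thus ?thesis using x(2) by simp
qed

lemma char_sum_triv: "(\<Sum>y\<in>UNIV - {0::'a::{finite,field}}. triv_char y) = of_nat (card (UNIV::'a set)) - 1"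
  using card_field_ge2[where 'a='a] by (simp add: triv_char_def card_Diff_singleton of_nat_diff)

lemma char_ne_triv:
  assumes "\<chi> \<in> characters" "\<chi> \<noteq> triv_char"
  shows "\<exists>x. x \<noteq> 0 \<and> \<chi> x \<noteq> 1"
proof -
  obtain x where "\<chi> x \<noteq> triv_char x" using assms(2) by auto
  thus ?thesis using char_0[OF assms(1)] by (auto simp: triv_char_def split: if_splits)
qed

lemma orth_ne1:
  fixes z :: "'a::{finite,field}"
  assumes fin: "finite (characters :: ('a \<Rightarrow> complex) set)" and z: "z \<noteq> 0" "z \<noteq> 1"
  shows "(\<Sum>\<chi>\<in>characters. \<chi> z) = 0"
proof -
  obtain \<psi> where psi: "\<psi> \<in> characters" "\<psi> z \<noteq> 1" using exists_char[OF z] by blast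
  have mulc: "(\<lambda>x. \<phi> x * \<chi> x) \<in> characters" if "\<phi> \<in> characters" "\<chi> \<in> characters" for \<phi> \<chi>
    using that unfolding characters_def by auto
  have invc: "(\<lambda>x. inverse (\<psi> x)) \<in> characters"
    using psi(1) unfolding characters_def by auto
  have bij: "bij_betw (\<lambda>\<chi> x. \<psi> x * \<chi> x) characters characters"
  proof (rule bij_betw_byWitness[where f'="\<lambda>\<chi> x. inverse (\<psi> x) * \<chi> x"])
    show "\<forall>a\<in>characters. (\<lambda>x. inverse (\<psi> x) * (\<psi> x * a x)) = a"
    proof
      fix a :: "'a \<Rightarrow> complex" assume a: "a \<in> characters"
      show "(\<lambda>x. inverse (\<psi> x) * (\<psi> x * a x)) = a"
      proof
        fix x show "inverse (\<psi> x) * (\<psi> x * a x) = a x"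
          using char_nz[OF psi(1), of x] char_0[OF a] by (cases "x = 0") (auto simp: char_0[OF psi(1)])
      qed
    qed
    show "\<forall>a\<in>characters. (\<lambda>x. \<psi> x * (inverse (\<psi> x) * a x)) = a"
    proof
      fix a :: "'a \<Rightarrow> complex" assume a: "a \<in> characters"
      show "(\<lambda>x. \<psi> x * (inverse (\<psi> x) * a x)) = a"
      proof
        fix x show "\<psi> x * (inverse (\<psi> x) * a x) = a x"
          using char_nz[OF psi(1), of x] char_0[OF a] by (cases "x = 0") (auto simp: char_0[OF psi(1)])
      qed
    qed
    show "(\<lambda>\<chi> x. \<psi> x * \<chi> x) ` characters \<subseteq> characters" using mulc[OF psi(1)] by auto
    show "(\<lambda>\<chi> x. inverse (\<psi> x) * \<chi> x) ` characters \<subseteq> characters" using mulc[OF invc] by auto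
  qed
  have "(\<Sum>\<chi>\<in>characters. \<chi> z) = (\<Sum>\<chi>\<in>characters. \<psi> z * \<chi> z)"
    using sum.reindex_bij_betw[OF bij, of "\<lambda>\<chi>. \<chi> z"] by simp
  also have "\<dots> = \<psi> z * (\<Sum>\<chi>\<in>characters. \<chi> z)" by (simp add: sum_distrib_left)
  finally have "(1 - \<psi> z) * (\<Sum>\<chi>\<in>characters. \<chi> z) = 0" by (simp add: algebra_simps)
  thus ?thesis using psi(2) by simp
qed

lemma card_chars:
  assumes fin: "finite (characters :: ('a::{finite,field} \<Rightarrow> complex) set)"
  shows "of_nat (card (characters :: ('a \<Rightarrow> complex) set)) = (of_nat (card (UNIV::'a set)) - 1 :: complex)"
proof -
  let ?S = "UNIV - {0::'a}"
  let ?C = "characters :: ('a \<Rightarrow> complex) set"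
  have "(\<Sum>z\<in>?S. \<Sum>\<chi>\<in>?C. \<chi> z) = (\<Sum>z\<in>?S. if z = 1 then of_nat (card ?C) else 0)"
  proof (rule sum.cong[OF refl])
    fix z assume z: "z \<in> ?S"
    show "(\<Sum>\<chi>\<in>?C. \<chi> z) = (if z = 1 then of_nat (card ?C) else 0)"
      using orth_ne1[OF fin, of z] z by (auto simp: char_1)
  qed
  also have "\<dots> = of_nat (card ?C)" by (simp add: sum.delta)
  finally have L: "(\<Sum>z\<in>?S. \<Sum>\<chi>\<in>?C. \<chi> z) = of_nat (card ?C)" .
  have "(\<Sum>z\<in>?S. \<Sum>\<chi>\<in>?C. \<chi> z) = (\<Sum>\<chi>\<in>?C. \<Sum>z\<in>?S. \<chi> z)" by (rule sum.swap)
  also have "\<dots> = (\<Sum>\<chi>\<in>?C. if \<chi> = triv_char then of_nat (card (UNIV::'a set)) - 1 else 0)"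
  proof (rule sum.cong[OF refl])
    fix \<chi> assume ch: "\<chi> \<in> ?C"
    show "(\<Sum>z\<in>?S. \<chi> z) = (if \<chi> = triv_char then of_nat (card (UNIV::'a set)) - 1 else 0)"
    proof (cases "\<chi> = triv_char")
      case True thus ?thesis using char_sum_triv by simp
    next
      case False
      then obtain x where "x \<noteq> 0" "\<chi> x \<noteq> 1" using char_ne_triv[OF ch] by blast
      thus ?thesis using char_sum_nontriv[OF ch] False by simp
    qed
  qed
  also have "\<dots> = (of_nat (card (UNIV::'a set)) - 1) + (\<Sum>\<chi>\<in>?C - {triv_char}. if \<chi> = triv_char then of_nat (card (UNIV::'a set)) - 1 else 0)"
    by (subst sum.remove[OF fin triv_char_in]) simp
  also have "(\<Sum>\<chi>\<in>?C - {triv_char}. if \<chi> = triv_char then of_nat (card (UNIV::'a set)) - 1 else (0::complex)) = 0"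
    by (rule sum.neutral) auto
  finally show ?thesis using L by simp
qed

lemma nontriv_eq: "nontrivial_characters = characters - {triv_char}"
proof
  show "nontrivial_characters \<subseteq> characters - {triv_char}"
    unfolding nontrivial_characters_def triv_char_def by auto
  show "characters - {triv_char} \<subseteq> nontrivial_characters"
    unfolding nontrivial_characters_def using char_ne_triv by blast
qed

lemma orth_nontriv:
  fixes z :: "'a::{finite,field}"
  assumes fin: "finite (nontrivial_characters :: ('a \<Rightarrow> complex) set)" and z: "z \<noteq> 0"
  shows "(\<Sum>\<chi>\<in>nontrivial_characters. \<chi> z) = (if z = 1 then of_nat (card (UNIV::'a set)) - 1 else 0) - 1"
proof -
  have finC: "finite (characters :: ('a \<Rightarrow> complex) set)"
  proof -
    have "characters \<subseteq> insert triv_char (nontrivial_characters :: ('a \<Rightarrow> complex) set)"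
      using nontriv_eq by blast
    thus ?thesis using fin finite_subset by blast
  qed
  have "(\<Sum>\<chi>\<in>nontrivial_characters. \<chi> z) = (\<Sum>\<chi>\<in>characters. \<chi> z) - triv_char z"
    unfolding nontriv_eq using sum.remove[OF finC triv_char_in, of "\<lambda>\<chi>. \<chi> z"] by simp
  also have "(\<Sum>\<chi>\<in>characters. \<chi> z) = (if z = 1 then of_nat (card (UNIV::'a set)) - 1 else 0)"
  proof (cases "z = 1")
    case True
    have "(\<Sum>\<chi>\<in>characters. \<chi> z) = of_nat (card (characters :: ('a \<Rightarrow> complex) set))"
      using True by (simp add: char_1)
    thus ?thesis using card_chars[OF finC] True by simp
  next
    case False thus ?thesis using orth_ne1[OF finC z False] by simp
  qed
  finally show ?thesis using z by (simp add: triv_char_def)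
qed

lemma coeff_mult_012:
  fixes p q :: "'b::comm_semiring_1 poly"
  shows "coeff (p * q) 0 = coeff p 0 * coeff q 0"
    and "coeff (p * q) 1 = coeff p 0 * coeff q 1 + coeff p 1 * coeff q 0"
    and "coeff (p * q) 2 = coeff p 0 * coeff q 2 + coeff p 1 * coeff q 1 + coeff p 2 * coeff q 0"
  by (simp_all add: coeff_mult numeral_2_eq_2 atMost_Suc ac_simps)

lemma coeff_prod_list:
  fixes ps :: "complex poly list"
  assumes "\<forall>p\<in>set ps. coeff p 0 = 1 \<and> coeff p 1 = 0"
  shows "coeff (prod_list ps) 0 = 1 \<and> coeff (prod_list ps) 1 = 0 \<and>
         coeff (prod_list ps) 2 = sum_list (map (\<lambda>p. coeff p 2) ps)"
  using assms by (induct ps) (simp_all add: coeff_mult_012 coeff_mult_012[unfolded One_nat_def])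

lemma det_foldr:
  fixes A :: "'c \<Rightarrow> 'b::comm_ring_1 mat"
  assumes A: "\<And>x. A x \<in> carrier_mat n n"
  shows "foldr (\<lambda>x M. A x * M) cs (1\<^sub>m n) \<in> carrier_mat n n \<and>
         det (foldr (\<lambda>x M. A x * M) cs (1\<^sub>m n)) = prod_list (map (\<lambda>x. det (A x)) cs)"
proof (induct cs)
  case Nil thus ?case by simp
next
  case (Cons x cs)
  let ?F = "foldr (\<lambda>x M. A x * M) cs (1\<^sub>m n)"
  have F: "?F \<in> carrier_mat n n" using Cons by simp
  have "A x * ?F \<in> carrier_mat n n" using mult_carrier_mat[OF A F] .
  moreover have "det (A x * ?F) = det (A x) * det ?F" by (rule det_mult[OF A F])
  ultimately show ?case using Cons by simp
qed

lemma card_filter_sum: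
  assumes "finite S"
  shows "(of_nat (card {x\<in>S. P x}) :: 'b::semiring_1) = (\<Sum>x\<in>S. if P x then 1 else 0)"
proof -
  have "card {x\<in>S. P x} = (\<Sum>x\<in>{x\<in>S. P x}. 1)" by simp
  also have "\<dots> = (\<Sum>x\<in>S. if P x then 1 else 0)" by (rule sum.inter_filter[OF assms])
  finally show ?thesis by (simp add: of_nat_sum if_distrib cong: if_cong)
qed

lemma double_count:
  fixes P :: "nat \<Rightarrow> nat \<Rightarrow> bool"
  assumes sym: "\<And>i j. P i j = P j i"
  shows "2 * (\<Sum>i<n. card {j\<in>{i<..<n}. P i j}) = (\<Sum>j<n. card {i\<in>{..<n}. i \<noteq> j \<and> P i j})"
proof -
  define f where "f i j = (if P i j then 1 else 0 :: nat)" for i j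
  have fs: "f i j = f j i" for i j unfolding f_def using sym by simp
  define T where "T = {(x, y). x < y \<and> y < (n::nat)}"
  have finT: "finite T" unfolding T_def by (rule finite_subset[of _ "{..<n} \<times> {..<n}"]) auto
  have cardf: "card {j \<in> S. P i j} = (\<Sum>j\<in>S. f i j)" if "finite S" for S i
    unfolding f_def using card_filter_sum[OF that, where 'b=nat] by simp
  have cardg: "card {i \<in> S. P i j} = (\<Sum>i\<in>S. f i j)" if "finite S" for S j
    unfolding f_def using card_filter_sum[OF that, where 'b=nat] by simp
  have K: "(\<Sum>i<n. card {j\<in>{i<..<n}. P i j}) = (\<Sum>(x, y)\<in>T. f x y)"
  proof -
    have "(\<Sum>i<n. card {j\<in>{i<..<n}. P i j}) = (\<Sum>i<n. \<Sum>j\<in>{i<..<n}. f i j)"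
      by (rule sum.cong[OF refl], rule cardf) simp
    also have "\<dots> = (\<Sum>(x, y)\<in>Sigma {..<n} (\<lambda>i. {i<..<n}). f x y)" by (rule sum.Sigma) auto
    also have "Sigma {..<n} (\<lambda>i. {i<..<n}) = T" unfolding T_def by auto
    finally show ?thesis .
  qed
  have R: "(\<Sum>j<n. card {i\<in>{..<n}. i \<noteq> j \<and> P i j}) = (\<Sum>(j, i)\<in>Sigma {..<n} (\<lambda>j. {..<n} - {j}). f i j)"
  proof -
    have "(\<Sum>j<n. card {i\<in>{..<n}. i \<noteq> j \<and> P i j}) = (\<Sum>j<n. \<Sum>i\<in>{..<n} - {j}. f i j)"
    proof (rule sum.cong[OF refl])
      fix j
      have eq: "{i\<in>{..<n}. i \<noteq> j \<and> P i j} = {i\<in>{..<n} - {j}. P i j}" by auto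
      show "card {i\<in>{..<n}. i \<noteq> j \<and> P i j} = (\<Sum>i\<in>{..<n} - {j}. f i j)"
        unfolding eq by (rule cardg) simp
    qed
    also have "\<dots> = (\<Sum>(j, i)\<in>Sigma {..<n} (\<lambda>j. {..<n} - {j}). f i j)" by (rule sum.Sigma) auto
    finally show ?thesis .
  qed
  have split: "Sigma {..<n} (\<lambda>j. {..<n} - {j}) = T \<union> prod.swap ` T" unfolding T_def by auto
  have disj: "T \<inter> prod.swap ` T = {}" unfolding T_def by auto
  have "(\<Sum>(j, i)\<in>T \<union> prod.swap ` T. f i j) = (\<Sum>(j, i)\<in>T. f i j) + (\<Sum>(j, i)\<in>prod.swap ` T. f i j)"
    by (rule sum.union_disjoint) (use finT disj in auto)
  also have "(\<Sum>(j, i)\<in>T. f i j) = (\<Sum>(x, y)\<in>T. f x y)"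
    by (rule sum.cong[OF refl]) (auto simp: fs)
  also have "(\<Sum>(j, i)\<in>prod.swap ` T. f i j) = (\<Sum>(x, y)\<in>T. f x y)"
    by (subst sum.reindex) (auto simp: inj_on_def)
  finally show ?thesis using K R split by simp
qed
theorem proposition4p1:
  fixes m :: "'a::{finite,field} poly"
    and als :: "'a poly list"
    and chis :: "('a \<Rightarrow> complex) list"
  assumes "lead_coeff m = 1"
    and "degree m > 1"
    and "distinct als" and "set als = monic_unit_reps m"
    and "distinct chis" and "set chis = nontrivial_characters"
  shows "coeff (det (D_minus m als chis)) 1 = 0
    \<and> (degree m > 2 \<longrightarrow> coeff (det (D_minus m als chis)) 2 = 0)
    \<and> (degree m = 2 \<longrightarrow> coeff (det (D_minus m als chis)) 2 =
           of_nat (N_m m) / 2 *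
           ((of_nat (card (UNIV :: 'a set)) - 1) * (1 - of_nat (C_m m)) + of_nat (N_m m) - 1))"
proof -
  note dA = assms(2) and distA = assms(3) and setA = assms(4) and distC = assms(5) and setC = assms(6)
  interpret pc m by unfold_locales (rule dA)
  define n where "n = length als"
  have aMU: "als ! i \<in> MU" if "i < n" for i using that setA n_def nth_mem by blast
  have aU: "als ! i \<in> U" if "i < n" for i using aMU[OF that] MU_iff by simp
  have adist: "als ! i \<noteq> als ! j" if "i < n" "j < n" "i \<noteq> j" for i j
    using that distA n_def by (simp add: nth_eq_iff_index_eq)
  define d where "d i j = degree (qt (als ! i) (als ! j))" for i j
  define L where "L i j = lead_coeff (qt (als ! i) (als ! j))" for i j
  define cc where "cc \<chi> i j = inverse (\<chi> (L i j))" for \<chi> :: "'a \<Rightarrow> complex" and i j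
  have chars: "\<chi> \<in> characters" if "\<chi> \<in> set chis" for \<chi>
    using that setC unfolding nontrivial_characters_def by auto
  have L0: "L i j \<noteq> 0" if "i < n" "j < n" for i j
    unfolding L_def using U_nz[OF qt_U[OF aU[OF that(1)] aU[OF that(2)]]] by simp
  have dm_inst: "dmat n (cc \<chi>) d" if "\<chi> \<in> set chis" for \<chi>
  proof
    fix i assume i: "i < n"
    have "qt (als ! i) (als ! i) = 1" using qt_self[OF aU[OF i]] .
    thus "d i i = 0 \<and> cc \<chi> i i = 1"
      unfolding d_def cc_def L_def using char_1[OF chars[OF that]] by simp
  next
    fix i j assume "i < n" "j < n" "i \<noteq> j"
    thus "d i j \<ge> 1" unfolding d_def using deg_off aMU adist by blast
  qed
  have Deq: "D_mat m als \<chi> = dmat.M n (cc \<chi>) d" if "\<chi> \<in> set chis" for \<chi>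
  proof -
    have "dmat.M n (cc \<chi>) d = mat n n (\<lambda>(i,j). monom (cc \<chi> i j) (d i j))"
      by (rule dmat.M_def[OF dm_inst[OF that]])
    thus ?thesis unfolding D_mat_def cc_def d_def L_def n_def by simp
  qed
  have Dcar: "D_mat m als \<chi> \<in> carrier_mat n n" for \<chi> unfolding D_mat_def n_def by simp
  have detD: "det (D_minus m als chis) = prod_list (map (\<lambda>\<chi>. det (D_mat m als \<chi>)) chis)"
    unfolding D_minus_def n_def[symmetric] using det_foldr[of "D_mat m als" n chis, OF Dcar] by simp
  have cD: "coeff (det (D_mat m als \<chi>)) 0 = 1 \<and> coeff (det (D_mat m als \<chi>)) 1 = 0 \<and>
      coeff (det (D_mat m als \<chi>)) 2 = - (\<Sum>i<n. \<Sum>j\<in>{i<..<n}. if d i j = 1 \<and> d j i = 1 then cc \<chi> i j * cc \<chi> j i else 0)"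
    if "\<chi> \<in> set chis" for \<chi>
    unfolding Deq[OF that] using dmat.coeff0[OF dm_inst[OF that]] dmat.coeff1[OF dm_inst[OF that]]
      dmat.coeff2[OF dm_inst[OF that]] by simp
  have prodc: "coeff (det (D_minus m als chis)) 1 = 0 \<and>
      coeff (det (D_minus m als chis)) 2 = (\<Sum>\<chi>\<in>set chis. coeff (det (D_mat m als \<chi>)) 2)"
  proof -
    have "\<forall>p\<in>set (map (\<lambda>\<chi>. det (D_mat m als \<chi>)) chis). coeff p 0 = 1 \<and> coeff p 1 = 0"
      using cD by auto
    from coeff_prod_list[OF this]
    show ?thesis unfolding detD using distC by (simp add: sum_list_distinct_conv_sum_set o_def)
  qed
  have part2: "coeff (det (D_minus m als chis)) 2 = 0" if d2: "degree m > 2"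
  proof -
    have "coeff (det (D_mat m als \<chi>)) 2 = 0" if ch: "\<chi> \<in> set chis" for \<chi>
    proof -
      have "(if d i j = 1 \<and> d j i = 1 then cc \<chi> i j * cc \<chi> j i else 0) = 0"
        if "i < n" "j \<in> {i<..<n}" for i j
      proof -
        have "j < n" using that by simp
        thus ?thesis using deg_gt2[OF aU[OF that(1)] aU[OF \<open>j < n\<close>] d2] unfolding d_def by auto
      qed
      thus ?thesis using cD[OF ch] by simp
    qed
    thus ?thesis using prodc by simp
  qed
  have part3: "coeff (det (D_minus m als chis)) 2 =
           of_nat (N_m m) / 2 *
           ((of_nat (card (UNIV :: 'a set)) - 1) * (1 - of_nat (C_m m)) + of_nat (N_m m) - 1)"
    if d2: "degree m = 2"
  proof -
    define Q1 where "Q1 = (of_nat (card (UNIV :: 'a set)) - 1 :: complex)"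
    define P where "P i j = (L i j * L j i = 1)" for i j
    have d1: "d i j = 1" if "i < n" "j < n" "i \<noteq> j" for i j
    proof -
      have "d i j \<ge> 1" unfolding d_def using deg_off aMU adist that by blast
      moreover have "d i j < 2" unfolding d_def using qt_U[OF aU[OF that(1)] aU[OF that(2)]] U_iff d2 by simp
      ultimately show ?thesis by simp
    qed
    have finNT: "finite (nontrivial_characters :: ('a \<Rightarrow> complex) set)"
      by (subst setC[symmetric]) (rule finite_set)
    have inner: "(\<Sum>\<chi>\<in>set chis. cc \<chi> i j * cc \<chi> j i) = (if P i j then Q1 else 0) - 1"
      if "i < n" "j < n" for i j
    proof -
      have "(\<Sum>\<chi>\<in>set chis. cc \<chi> i j * cc \<chi> j i) = (\<Sum>\<chi>\<in>set chis. \<chi> (inverse (L i j * L j i)))"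
      proof (rule sum.cong[OF refl])
        fix \<chi> assume "\<chi> \<in> set chis"
        hence ch: "\<chi> \<in> characters" by (rule chars)
        have "cc \<chi> i j * cc \<chi> j i = \<chi> (inverse (L i j)) * \<chi> (inverse (L j i))"
          unfolding cc_def using char_inverse[OF ch L0[OF that]] char_inverse[OF ch L0[OF that(2,1)]] by simp
        also have "\<dots> = \<chi> (inverse (L i j) * inverse (L j i))"
          using char_mult[OF ch] L0[OF that] L0[OF that(2,1)] by simp
        finally show "cc \<chi> i j * cc \<chi> j i = \<chi> (inverse (L i j * L j i))" by (simp add: mult.commute)
      qed
      also have "\<dots> = (if inverse (L i j * L j i) = 1 then Q1 else 0) - 1"
        unfolding setC Q1_def by (rule orth_nontriv[OF finNT]) (use L0[OF that] L0[OF that(2,1)] in simp)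
      also have "(inverse (L i j * L j i) = 1) = P i j"
        unfolding P_def by (rule inverse_eq_1_iff)
      finally show ?thesis .
    qed
    have "coeff (det (D_minus m als chis)) 2 =
        (\<Sum>\<chi>\<in>set chis. - (\<Sum>i<n. \<Sum>j\<in>{i<..<n}. cc \<chi> i j * cc \<chi> j i))"
    proof -
      have "coeff (det (D_mat m als \<chi>)) 2 = - (\<Sum>i<n. \<Sum>j\<in>{i<..<n}. cc \<chi> i j * cc \<chi> j i)"
        if ch: "\<chi> \<in> set chis" for \<chi>
      proof -
        have "(\<Sum>i<n. \<Sum>j\<in>{i<..<n}. if d i j = 1 \<and> d j i = 1 then cc \<chi> i j * cc \<chi> j i else 0)
          = (\<Sum>i<n. \<Sum>j\<in>{i<..<n}. cc \<chi> i j * cc \<chi> j i)"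
          by (intro sum.cong refl) (simp add: d1)
        thus ?thesis using cD[OF ch] by simp
      qed
      thus ?thesis using prodc by simp
    qed
    also have "\<dots> = - (\<Sum>i<n. \<Sum>j\<in>{i<..<n}. \<Sum>\<chi>\<in>set chis. cc \<chi> i j * cc \<chi> j i)"
      by (simp add: sum_negf sum.swap[of _ "set chis"])
    also have "\<dots> = - (\<Sum>i<n. \<Sum>j\<in>{i<..<n}. (if P i j then Q1 else 0) - 1)"
      by (intro arg_cong[where f=uminus] sum.cong refl) (simp add: inner)
    also have "\<dots> = - (\<Sum>i<n. \<Sum>j\<in>{i<..<n}. Q1 * (if P i j then 1 else 0) - 1)"
      by (intro arg_cong[where f=uminus] sum.cong refl) simp
    also have "\<dots> = - ((\<Sum>i<n. \<Sum>j\<in>{i<..<n}. Q1 * (if P i j then 1 else 0)) - (\<Sum>i<n. \<Sum>j\<in>{i<..<n}. (1::complex)))"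
      by (simp only: sum_subtractf)
    also have "\<dots> = (\<Sum>i<n. \<Sum>j\<in>{i<..<n}. (1::complex)) - Q1 * (\<Sum>i<n. \<Sum>j\<in>{i<..<n}. if P i j then 1 else 0)"
      by (simp only: sum_distrib_left minus_diff_eq)
    also have "(\<Sum>i<n. \<Sum>j\<in>{i<..<n}. (1::complex)) = of_nat (\<Sum>i<n. card {j\<in>{i<..<n}. True})"
      by (simp only: of_nat_sum card_filter_sum[OF finite_greaterThanLessThan] if_True)
    also have "(\<Sum>i<n. \<Sum>j\<in>{i<..<n}. if P i j then 1 else (0::complex)) = of_nat (\<Sum>i<n. card {j\<in>{i<..<n}. P i j})"
      by (simp only: of_nat_sum card_filter_sum[OF finite_greaterThanLessThan])
    finally have c2: "coeff (det (D_minus m als chis)) 2 =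
        of_nat (\<Sum>i<n. card {j\<in>{i<..<n}. True}) - Q1 * of_nat (\<Sum>i<n. card {j\<in>{i<..<n}. P i j})" .
    have K0: "2 * (\<Sum>i<n. card {j\<in>{i<..<n}. True}) = n * (n - 1)"
    proof -
      have "2 * (\<Sum>i<n. card {j\<in>{i<..<n}. True}) = (\<Sum>j<n. card {i\<in>{..<n}. i \<noteq> j \<and> True})"
        by (rule double_count) simp
      also have "\<dots> = (\<Sum>j<n. n - 1)"
      proof (rule sum.cong[OF refl])
        fix j assume "j \<in> {..<n}"
        hence "{i\<in>{..<n}. i \<noteq> j \<and> True} = {..<n} - {j}" by auto
        thus "card {i\<in>{..<n}. i \<noteq> j \<and> True} = n - 1" using \<open>j \<in> {..<n}\<close> by simp
      qed
      finally show ?thesis by simp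
    qed
    have finMU: "finite MU" using setA[symmetric] by simp
    have K: "2 * (\<Sum>i<n. card {j\<in>{i<..<n}. P i j}) = n * (C_m m - 1)"
    proof -
      have "2 * (\<Sum>i<n. card {j\<in>{i<..<n}. P i j}) = (\<Sum>j<n. card {i\<in>{..<n}. i \<noteq> j \<and> P i j})"
        by (rule double_count) (auto simp: P_def mult.commute)
      also have "\<dots> = (\<Sum>j<n. C_m m - 1)"
      proof (rule sum.cong[OF refl])
        fix j assume "j \<in> {..<n}"
        hence j: "j < n" by simp
        let ?b = "als ! j"
        have img: "(\<lambda>i. als ! i) ` {i\<in>{..<n}. i \<noteq> j \<and> P i j} =
          {a \<in> MU. a \<noteq> ?b \<and> lead_coeff (qt a ?b) * lead_coeff (qt ?b a) = 1}"
        proof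
          show "(\<lambda>i. als ! i) ` {i\<in>{..<n}. i \<noteq> j \<and> P i j} \<subseteq>
            {a \<in> MU. a \<noteq> ?b \<and> lead_coeff (qt a ?b) * lead_coeff (qt ?b a) = 1}"
            using aMU adist j unfolding P_def L_def by auto
          show "{a \<in> MU. a \<noteq> ?b \<and> lead_coeff (qt a ?b) * lead_coeff (qt ?b a) = 1} \<subseteq>
            (\<lambda>i. als ! i) ` {i\<in>{..<n}. i \<noteq> j \<and> P i j}"
          proof
            fix a assume a: "a \<in> {a \<in> MU. a \<noteq> ?b \<and> lead_coeff (qt a ?b) * lead_coeff (qt ?b a) = 1}"
            hence "a \<in> set als" using setA by simp
            then obtain i where i: "i < n" "a = als ! i" unfolding n_def by (auto simp: in_set_conv_nth)
            have "i \<noteq> j" using i a by auto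
            moreover have "P i j" using a i unfolding P_def L_def by simp
            ultimately show "a \<in> (\<lambda>i. als ! i) ` {i\<in>{..<n}. i \<noteq> j \<and> P i j}" using i by auto
          qed
        qed
        have inj: "inj_on (\<lambda>i. als ! i) {i\<in>{..<n}. i \<noteq> j \<and> P i j}"
          by (rule inj_on_nth) (use distA n_def in auto)
        have "card {i\<in>{..<n}. i \<noteq> j \<and> P i j} =
            card {a \<in> MU. a \<noteq> ?b \<and> lead_coeff (qt a ?b) * lead_coeff (qt ?b a) = 1}"
          using card_image[OF inj] img by simp
        also have "\<dots> = C_m m - 1" by (rule count_lemma[OF aMU[OF j] finMU])
        finally show "card {i\<in>{..<n}. i \<noteq> j \<and> P i j} = C_m m - 1" .
      qed
      finally show ?thesis by simp
    qed
    have C1: "C_m m \<ge> 1"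
    proof -
      have "1 \<in> {r \<in> MU. lead_coeff (iv r) = 1}" using one_MU iv_one by simp
      moreover have "finite {r \<in> MU. lead_coeff (iv r) = 1}" using finMU by simp
      ultimately have "0 < card {r \<in> MU. lead_coeff (iv r) = 1}" by (auto simp: card_gt_0_iff)
      thus ?thesis unfolding C_m_def by simp
    qed
    have Nn: "N_m m = n"
    proof -
      have q1: "card (UNIV :: 'a set) - 1 > 0" using card_field_ge2[where 'a='a] by simp
      have "card MU = n" unfolding n_def using setA[symmetric] distinct_card[OF distA] by simp
      thus ?thesis unfolding N_m_def card_U using q1 by simp
    qed
    define k0 where "k0 = (\<Sum>i<n. card {j\<in>{i<..<n}. True})"
    define k where "k = (\<Sum>i<n. card {j\<in>{i<..<n}. P i j})"
    have ek0: "of_nat k0 = (of_nat n * (of_nat n - 1) / 2 :: complex)"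
    proof -
      have "(2::complex) * of_nat k0 = of_nat (2 * k0)" by simp
      also have "2 * k0 = n * (n - 1)" using K0 unfolding k0_def .
      also have "(of_nat (n * (n - 1)) :: complex) = of_nat n * (of_nat n - 1)" by (cases n) (simp_all add: algebra_simps)
      finally have h: "(2::complex) * of_nat k0 = of_nat n * (of_nat n - 1)" .
      have "(of_nat k0 :: complex) = (2 * of_nat k0) / 2" by simp
      also have "\<dots> = of_nat n * (of_nat n - 1) / 2" by (simp only: h)
      finally show ?thesis .
    qed
    have ek: "of_nat k = (of_nat n * (of_nat (C_m m) - 1) / 2 :: complex)"
    proof -
      have "(2::complex) * of_nat k = of_nat (2 * k)" by simp
      also have "2 * k = n * (C_m m - 1)" using K unfolding k_def .
      also have "(of_nat (n * (C_m m - 1)) :: complex) = of_nat n * (of_nat (C_m m) - 1)" using C1 by (simp add: of_nat_diff)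
      finally have h: "(2::complex) * of_nat k = of_nat n * (of_nat (C_m m) - 1)" .
      have "(of_nat k :: complex) = (2 * of_nat k) / 2" by simp
      also have "\<dots> = of_nat n * (of_nat (C_m m) - 1) / 2" by (simp only: h)
      finally show ?thesis .
    qed
    have "coeff (det (D_minus m als chis)) 2 = of_nat k0 - Q1 * of_nat k"
      unfolding k0_def k_def by (rule c2)
    also have "\<dots> = of_nat n * (of_nat n - 1) / 2 - Q1 * (of_nat n * (of_nat (C_m m) - 1) / 2)"
      by (simp only: ek0 ek)
    also have "\<dots> = of_nat n / 2 * (Q1 * (1 - of_nat (C_m m)) + of_nat n - 1)"
      by (simp add: field_simps)
    finally have X: "coeff (det (D_minus m als chis)) 2 = of_nat n / 2 * (Q1 * (1 - of_nat (C_m m)) + of_nat n - 1)" .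
    show ?thesis unfolding Nn by (rule X[unfolded Q1_def])
  qed
  show ?thesis using prodc part2 part3 by blast
qed

end
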